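(* Let $F$ be a field. Every Hurwitz $F$-algebra whose norm is anisotropic is reversible. A split Hurwitz $F$-algebra (i.e. one whose norm is isotropic) is reversible if and only if its dimension is at most $2$.
   Context: An $F$-algebra is a vector space with a bilinear (not necessarily associative) multiplication; all algebras are unital. For a quadratic form $q:V\to F$, let $\langle x,y\rangle=q(x+y)-q(x)-q(y)$ and $V^\perp=\{x\in V:\langle x,V\rangle=0\}$; $q$ is non-degenerate if either $V^\perp=0$, or $\dim V^\perp=1$ and $q(V^\perp)\neq 0$. $q$ is anisotropic if $q(x)\ne 0$ for all nonzero $x$, isotropic otherwise. A Hurwitz algebra is a unital $F$-algebra $A$ with a non-degenerate quadratic form $n:A\to F$ (its norm) satisfying $n(ab)=n(a)n(b)$ for all $a,b\in A$; it is split if $n$ is isotropic. An algebra $A$ is reversible if $ab=0$ implies $ba=0$ for all $a,b\in A$. *)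

theory Defs
  imports Complex_Main
begin

definition is_algebra :: "('f::field \<Rightarrow> 'a::ab_group_add \<Rightarrow> 'a) \<Rightarrow> ('a \<Rightarrow> 'a \<Rightarrow> 'a) \<Rightarrow> bool" where
  "is_algebra scale mult \<longleftrightarrow>
     vector_space scale \<and>
     (\<forall>x y z. mult (x + y) z = mult x z + mult y z) \<and>
     (\<forall>x y z. mult x (y + z) = mult x y + mult x z) \<and>
     (\<forall>c x y. mult (scale c x) y = scale c (mult x y)) \<and>
     (\<forall>c x y. mult x (scale c y) = scale c (mult x y))"

definition unital :: "('a \<Rightarrow> 'a \<Rightarrow> 'a) \<Rightarrow> bool" where
  "unital mult \<longleftrightarrow> (\<exists>e. \<forall>x. mult e x = x \<and> mult x e = x)"

definition polar :: "('a::ab_group_add \<Rightarrow> 'f::field) \<Rightarrow> 'a \<Rightarrow> 'a \<Rightarrow> 'f" where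
  "polar q x y = q (x + y) - q x - q y"

definition quadratic_form :: "('f::field \<Rightarrow> 'a::ab_group_add \<Rightarrow> 'a) \<Rightarrow> ('a \<Rightarrow> 'f) \<Rightarrow> bool" where
  "quadratic_form scale q \<longleftrightarrow>
     (\<forall>c x. q (scale c x) = c ^ 2 * q x) \<and>
     (\<forall>x y z. polar q (x + y) z = polar q x z + polar q y z) \<and>
     (\<forall>c x y. polar q (scale c x) y = c * polar q x y)"

definition radical :: "('a::ab_group_add \<Rightarrow> 'f::field) \<Rightarrow> 'a set" where
  "radical q = {x. \<forall>y. polar q x y = 0}"

definition nondegenerate :: "('f::field \<Rightarrow> 'a::ab_group_add \<Rightarrow> 'a) \<Rightarrow> ('a \<Rightarrow> 'f) \<Rightarrow> bool" where
  "nondegenerate scale q \<longleftrightarrow>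
     radical q = {0} \<or>
     (vector_space.dim scale (radical q) = 1 \<and> (\<exists>x\<in>radical q. q x \<noteq> 0))"

definition anisotropic :: "('a::ab_group_add \<Rightarrow> 'f::field) \<Rightarrow> bool" where
  "anisotropic q \<longleftrightarrow> (\<forall>x. x \<noteq> 0 \<longrightarrow> q x \<noteq> 0)"

definition hurwitz_algebra ::
  "('f::field \<Rightarrow> 'a::ab_group_add \<Rightarrow> 'a) \<Rightarrow> ('a \<Rightarrow> 'a \<Rightarrow> 'a) \<Rightarrow> ('a \<Rightarrow> 'f) \<Rightarrow> bool" where
  "hurwitz_algebra scale mult n \<longleftrightarrow>
     is_algebra scale mult \<and> unital mult \<and>
     quadratic_form scale n \<and> nondegenerate scale n \<and>
     (\<forall>a b. n (mult a b) = n a * n b)"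

definition reversible :: "('a::zero \<Rightarrow> 'a \<Rightarrow> 'a) \<Rightarrow> bool" where
  "reversible mult \<longleftrightarrow> (\<forall>a b. mult a b = 0 \<longrightarrow> mult b a = 0)"

definition finite_dim :: "('f::field \<Rightarrow> 'a::ab_group_add \<Rightarrow> 'a) \<Rightarrow> bool" where
  "finite_dim scale \<longleftrightarrow> (\<exists>B. finite B \<and> module.span scale B = UNIV)"

end

theory Submission
  imports Defs
begin

context vector_space begin

lemma card_le_dim_gen:
  assumes "finite W" "V \<subseteq> span W" "independent B" "B \<subseteq> V"
  shows "card B \<le> dim V"
proof -
  obtain A where A: "A \<subseteq> V" "independent A" "V \<subseteq> span A" "card A = dim V"
    by (rule basis_exists)
  have fA: "finite A" using independent_span_bound[of W A] assms A by auto
  have "B \<subseteq> span A" using assms A by auto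
  then show ?thesis using independent_span_bound[of A B] fA assms A by auto
qed

end

locale hw = vector_space scale
  for scale :: "'f::field \<Rightarrow> 'a::ab_group_add \<Rightarrow> 'a" (infixr "*s" 75) +
  fixes mult :: "'a \<Rightarrow> 'a \<Rightarrow> 'a" (infixl "\<star>" 70)
    and n :: "'a \<Rightarrow> 'f" and e :: 'a
  assumes ml_add: "(x + y) \<star> z = x \<star> z + y \<star> z"
    and mr_add: "x \<star> (y + z) = x \<star> y + x \<star> z"
    and ml_scale: "(c *s x) \<star> y = c *s (x \<star> y)"
    and mr_scale: "x \<star> (c *s y) = c *s (x \<star> y)"
    and el: "e \<star> x = x" and er: "x \<star> e = x"
    and n_scale: "n (c *s x) = c^2 * n x"
    and p_add: "polar n (x + y) z = polar n x z + polar n y z"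
    and p_scale: "polar n (c *s x) y = c * polar n x y"
    and n_mult: "n (x \<star> y) = n x * n y"
    and nondeg: "(\<And>y. polar n w y = 0) \<Longrightarrow> n w = 0 \<Longrightarrow> w = 0"
    and ne: "n e = 1"
begin

lemma psym: "polar n x y = polar n y x" by (simp add: polar_def algebra_simps)
lemma p_add2: "polar n z (x+y) = polar n z x + polar n z y" using p_add psym by metis
lemma p_scale2: "polar n y (c *s x) = c * polar n y x" using p_scale psym by metis
lemma n0: "n 0 = 0" using n_scale[of 0 0] by simp
lemma p0: "polar n 0 y = 0" by (simp add: polar_def n0)
lemma p_neg: "polar n (-x) y = - polar n x y"
  using p_add[of x "-x" y] p0 by (simp add: add_eq_0_iff)
lemma p_diff: "polar n (x - y) z = polar n x z - polar n y z"
  using p_add[of x "-y" z] p_neg[of y z] by simp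
lemma p_diff2: "polar n z (x - y) = polar n z x - polar n z y"
  using p_diff psym by metis
lemma p_neg2: "polar n y (-x) = - polar n y x" using p_neg psym by metis
lemma n_add: "n (x+y) = n x + n y + polar n x y" by (simp add: polar_def)
lemma n_neg: "n (-x) = n x" using n_scale[of "-1" x] by simp
lemma m0l: "0 \<star> z = 0" using ml_add[of 0 0 z] by simp
lemma m0r: "z \<star> 0 = 0" using mr_add[of z 0 0] by simp
lemma mnegl: "(-x) \<star> z = -(x \<star> z)" using ml_add[of x "-x" z] m0l by (simp add: add_eq_0_iff)
lemma mnegr: "z \<star> (-x) = -(z \<star> x)" using mr_add[of z x "-x"] m0r by (simp add: add_eq_0_iff)
lemma mdiffl: "(x - y) \<star> z = x \<star> z - y \<star> z" using ml_add[of x "-y" z] mnegl by simp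
lemma mdiffr: "z \<star> (x - y) = z \<star> x - z \<star> y" using mr_add[of z x "-y"] mnegr by simp

lemma L1: "polar n (x\<star>y) (x\<star>z) = n x * polar n y z"
proof -
  have "n (x\<star>y + x\<star>z) = n x * n (y+z)" using n_mult[of x "y+z"] by (simp add: mr_add)
  then show ?thesis by (simp add: n_add n_mult algebra_simps)
qed

lemma L2: "polar n (y\<star>x) (z\<star>x) = polar n y z * n x"
proof -
  have "n (y\<star>x + z\<star>x) = n (y+z) * n x" using n_mult[of "y+z" x] by (simp add: ml_add)
  then show ?thesis by (simp add: n_add n_mult algebra_simps)
qed

lemma L1': "polar n (x\<star>y) (w\<star>z) + polar n (w\<star>y) (x\<star>z) = polar n x w * polar n y z"
proof -
  have "polar n ((x+w)\<star>y) ((x+w)\<star>z) = n (x+w) * polar n y z" by (rule L1)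
  then show ?thesis
    by (simp add: ml_add p_add p_add2 n_add L1 algebra_simps psym[of w x])
qed

lemma L2': "polar n (y\<star>x) (z\<star>w) + polar n (y\<star>w) (z\<star>x) = polar n y z * polar n x w"
proof -
  have "polar n (y\<star>(x+w)) (z\<star>(x+w)) = polar n y z * n (x+w)" by (rule L2)
  then show ?thesis
    by (simp add: mr_add p_add p_add2 n_add L2 algebra_simps psym[of w x])
qed

definition t :: "'a \<Rightarrow> 'f" where "t x = polar n x e"
definition cj :: "'a \<Rightarrow> 'a" where "cj x = t x *s e - x"

lemma cj_l: "cj x \<star> b = t x *s b - x \<star> b"
  by (simp add: cj_def mdiffl ml_scale el)
lemma cj_r: "b \<star> cj x = t x *s b - b \<star> x"
  by (simp add: cj_def mdiffr mr_scale er)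

lemma adjL: "polar n (x\<star>a) b = polar n a (cj x \<star> b)"
  using L1'[of x a e b] by (simp add: el cj_l p_diff2 p_scale2 t_def algebra_simps)

lemma adjR: "polar n (a\<star>x) b = polar n a (b \<star> cj x)"
  using L2'[of a x b e] by (simp add: er cj_r p_diff2 p_scale2 t_def algebra_simps)

lemma pxx: "polar n x x = 2 * n x"
proof -
  have "n (x + x) = 4 * n x" using n_scale[of 2 x] by (simp add: scale_left_distrib[of 1 1, simplified])
  then show ?thesis by (simp add: n_add)
qed

lemma n_cj: "n (cj x) = n x"
proof -
  have "n (cj x) = n (t x *s e + (-x))" by (simp add: cj_def)
  also have "\<dots> = n (t x *s e) + n (-x) + polar n (t x *s e) (-x)" by (rule n_add)
  also have "\<dots> = n x" by (simp add: n_scale n_neg p_scale psym[of e x] p_neg ne t_def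
        p_scale2 power2_eq_square p_diff2 p_neg2)
  finally show ?thesis .
qed

lemma t_cj: "t (cj x) = t x"
  by (simp add: t_def cj_def p_diff p_scale pxx ne)

lemma cj_cj: "cj (cj x) = x"
proof -
  have "cj (cj x) = t (cj x) *s e - cj x" by (simp only: cj_def[of "cj x"])
  then show ?thesis using t_cj[of x] by (simp add: cj_def)
qed

lemma iso_sq: assumes "n s = 0" shows "s \<star> s = t s *s s"
proof -
  define d where "d = s \<star> s - t s *s s"
  have "polar n d w = 0" for w
  proof -
    have 1: "polar n (s\<star>s) w + polar n s (s\<star>w) = t s * polar n s w"
      using L1'[of s s e w] by (simp add: el t_def)
    have "polar n s (s\<star>w) = 0" using L1[of s e w] assms by (simp add: er)
    then show ?thesis using 1 by (simp add: d_def p_diff p_scale)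
  qed
  moreover have "n d = 0"
  proof -
    have "d = s \<star> (s - t s *s e)" by (simp add: d_def mdiffr mr_scale er)
    then show ?thesis by (simp add: n_mult assms)
  qed
  ultimately have "d = 0" by (rule nondeg)
  then show ?thesis by (simp add: d_def)
qed

lemma left_kill: assumes "n u = 0" shows "u \<star> (cj u \<star> z) = 0"
proof (rule nondeg)
  fix w show "polar n (u \<star> (cj u \<star> z)) w = 0"
    by (simp only: adjL[of u "cj u \<star> z" w] L1 n_cj assms) simp
next
  show "n (u \<star> (cj u \<star> z)) = 0" by (simp add: n_mult assms)
qed

lemma G:
  assumes s0: "n s = 0" and rev: "\<And>a b. a \<star> b = 0 \<Longrightarrow> b \<star> a = 0"
  shows "polar n s w *s s = t s *s (cj w \<star> s)"
proof -
  have "cj s \<star> (cj (cj s) \<star> z) = 0" for z by (rule left_kill) (simp add: n_cj s0)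
  then have "(s \<star> z) \<star> cj s = 0" for z using rev by (simp add: cj_cj)
  then have k: "polar n (s \<star> z) (w \<star> s) = 0" for z
    using adjR[of "s \<star> z" "cj s" w] by (simp add: cj_cj p0)
  define d where "d = polar n s w *s s - t s *s (cj w \<star> s)"
  have "polar n d z = 0" for z
  proof -
    have 1: "polar n (s\<star>z) (w\<star>s) + polar n (w\<star>z) (s\<star>s) = polar n s w * polar n z s"
      by (rule L1')
    have 2: "polar n (w\<star>z) (s\<star>s) = t s * polar n z (cj w \<star> s)"
      using adjL[of w z s] by (simp add: iso_sq s0 p_scale2)
    show ?thesis using 1 2 k[of z] by (simp add: d_def p_diff p_scale psym[of z])
  qed
  moreover have "n d = 0"
  proof -
    have "d = (polar n s w *s e - t s *s cj w) \<star> s" by (simp add: d_def mdiffl ml_scale el)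
    then show ?thesis by (simp add: n_mult s0)
  qed
  ultimately have "d = 0" by (rule nondeg)
  then show ?thesis by (simp add: d_def)
qed

lemma main:
  assumes s0: "n u = 0" and u0: "u \<noteq> 0" and rev: "\<And>a b. a \<star> b = 0 \<Longrightarrow> b \<star> a = 0"
  shows "span {u, cj u} = UNIV"
proof -
  have tu: "t u \<noteq> 0"
  proof
    assume "t u = 0"
    then have "polar n u w *s u = 0" for w using G[OF s0 rev, of w] by simp
    then have "polar n u w = 0" for w using u0 by simp
    then have "u = 0" using nondeg s0 by blast
    then show False using u0 by simp
  qed
  have cu0: "n (cj u) = 0" by (simp add: n_cj s0)
  have A: "y \<star> u \<in> span {u, cj u}" for y
  proof -
    have "polar n u (cj y) *s u = t u *s (y \<star> u)" using G[OF s0 rev, of "cj y"] by (simp add: cj_cj)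
    then have "(1 / t u) *s (polar n u (cj y) *s u) = (1 / t u) *s (t u *s (y \<star> u))" by simp
    then have "y \<star> u = (polar n u (cj y) / t u) *s u" using tu by simp
    then show ?thesis by (metis span_base span_scale insertI1)
  qed
  have B: "y \<star> cj u \<in> span {u, cj u}" for y
  proof -
    have "polar n (cj u) (cj y) *s cj u = t (cj u) *s (y \<star> cj u)"
      using G[OF cu0 rev, of "cj y"] by (simp add: cj_cj)
    then have "(1 / t u) *s (polar n (cj u) (cj y) *s cj u) = (1 / t u) *s (t u *s (y \<star> cj u))" by (simp add: t_cj)
    then have "y \<star> cj u = (polar n (cj u) (cj y) / t u) *s cj u" using tu by simp
    then show ?thesis by (metis span_base span_scale insertI1 insertI2)
  qed
  have "y \<in> span {u, cj u}" for y
  proof -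
    have "y \<star> u + y \<star> cj u = t u *s y" by (simp add: cj_r)
    then have "y = (1 / t u) *s (y \<star> u + y \<star> cj u)" using tu by simp
    then show ?thesis using A B by (metis span_add span_scale)
  qed
  then show ?thesis by auto
qed

lemma comm:
  assumes fW: "finite W" and sW: "span W = UNIV" and d2: "dim (UNIV :: 'a set) \<le> 2"
  shows "x \<star> y = y \<star> x"
proof -
  have e0: "e \<noteq> 0" using ne n0 by auto
  show ?thesis
  proof (cases "x \<in> span {e}")
    case True
    then obtain k where "x = k *s e" by (auto simp: span_singleton)
    then show ?thesis by (simp add: ml_scale mr_scale el er)
  next
    case False
    have ie: "independent {e}" using e0 by (simp add: independent_insert span_empty)
    have xe: "x \<noteq> e" using False span_base[of e "{e}"] by auto
    have ixe: "independent {x, e}" using ie False xe by (simp add: independent_insert)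
    have "y \<in> span {x, e}"
    proof (rule ccontr)
      assume yn: "y \<notin> span {x, e}"
      have "y \<noteq> x" "y \<noteq> e" using yn span_base[of x "{x,e}"] span_base[of e "{x,e}"] by auto
      have iyxe: "independent {y, x, e}" using ixe yn \<open>y \<noteq> x\<close> \<open>y \<noteq> e\<close>
        by (simp add: independent_insert)
      have "card {y, x, e} \<le> dim (UNIV :: 'a set)"
        by (rule card_le_dim_gen[OF fW _ iyxe]) (use sW in auto)
      moreover have "card {y, x, e} = 3" using \<open>y \<noteq> x\<close> \<open>y \<noteq> e\<close> xe by simp
      ultimately show False using d2 by simp
    qed
    then obtain a where "y - a *s x \<in> span {e}" by (auto simp: span_breakdown_eq)
    then obtain b where "y - a *s x = b *s e" by (auto simp: span_singleton)
    then have "y = a *s x + b *s e" by (simp add: algebra_simps)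
    then show ?thesis by (simp add: ml_add mr_add ml_scale mr_scale el er)
  qed
qed

end

lemma nondeg_gen:
  fixes scale :: "'f::field \<Rightarrow> 'a::ab_group_add \<Rightarrow> 'a"
  assumes vs: "vector_space scale" and qf: "quadratic_form scale n" and nd: "nondegenerate scale n"
    and wR: "\<And>y. polar n w y = 0" and nw: "n w = 0"
  shows "w = 0"
proof -
  interpret V: vector_space scale by (rule vs)
  have nsc: "n (scale c x) = c^2 * n x" for c x using qf by (simp add: quadratic_form_def)
  have n0: "n 0 = 0" using nsc[of 0 0] by simp
  have wR': "w \<in> radical n" using wR by (simp add: radical_def)
  show ?thesis
  proof (rule ccontr)
    assume w0: "w \<noteq> 0"
    then have "\<not> radical n = {0}" using wR' by auto
    then obtain r where d1: "V.dim (radical n) = 1" and rR: "r \<in> radical n" and nr: "n r \<noteq> 0"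
      using nd by (auto simp: nondegenerate_def)
    have r0: "r \<noteq> 0" using nr n0 by auto
    have wsp: "w \<notin> V.span {r}"
    proof
      assume "w \<in> V.span {r}"
      then obtain k where "w = scale k r" by (auto simp: V.span_singleton)
      then have "k^2 * n r = 0" using nw nsc by simp
      then have "k = 0" using nr by simp
      then show False using w0 \<open>w = scale k r\<close> by simp
    qed
    have wr: "w \<noteq> r" using nw nr by auto
    have ir: "V.independent {r}" using r0 by (simp add: V.independent_insert V.span_empty)
    have iwr: "V.independent {w, r}" using ir wsp wr by (simp add: V.independent_insert)
    obtain A where A: "A \<subseteq> radical n" "V.independent A" "radical n \<subseteq> V.span A" "card A = V.dim (radical n)"
      by (rule V.basis_exists)
    have fA: "finite A" using A(4) d1 card.infinite by fastforce
    have "card {w, r} \<le> V.dim (radical n)"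
      by (rule V.card_le_dim_gen[OF fA A(3) iwr]) (use wR' rR in auto)
    then show False using d1 wr by simp
  qed
qed

theorem proposition4p2:
  fixes scale :: "'f::field \<Rightarrow> 'a::ab_group_add \<Rightarrow> 'a"
    and mult :: "'a \<Rightarrow> 'a \<Rightarrow> 'a"
    and n :: "'a \<Rightarrow> 'f"
  assumes "hurwitz_algebra scale mult n"
  shows "(anisotropic n \<longrightarrow> reversible mult) \<and>
         (\<not> anisotropic n \<longrightarrow>
            (reversible mult \<longleftrightarrow> finite_dim scale \<and> vector_space.dim scale (UNIV :: 'a set) \<le> 2))"
proof -
  have vs: "vector_space scale"
    and ml_add: "\<And>x y z. mult (x + y) z = mult x z + mult y z"
    and mr_add: "\<And>x y z. mult x (y + z) = mult x y + mult x z"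
    and ml_scale: "\<And>c x y. mult (scale c x) y = scale c (mult x y)"
    and mr_scale: "\<And>c x y. mult x (scale c y) = scale c (mult x y)"
    and un: "unital mult" and qf: "quadratic_form scale n" and nd: "nondegenerate scale n"
    and n_mult: "\<And>a b. n (mult a b) = n a * n b"
    using assms unfolding hurwitz_algebra_def is_algebra_def by blast+
  obtain e where el: "\<And>x. mult e x = x" and er: "\<And>x. mult x e = x" using un unfolding unital_def by blast
  have n_scale: "\<And>c x. n (scale c x) = c^2 * n x"
    and p_add: "\<And>x y z. polar n (x + y) z = polar n x z + polar n y z"
    and p_scale: "\<And>c x y. polar n (scale c x) y = c * polar n x y"
    using qf unfolding quadratic_form_def by blast+
  interpret V: vector_space scale by (rule vs)
  have n0: "n 0 = 0" using n_scale[of 0 0] by simp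
  have m0l: "mult 0 z = 0" for z using ml_add[of 0 0 z] by simp
  have m0r: "mult z 0 = 0" for z using mr_add[of z 0 0] by simp
  have part1: "anisotropic n \<longrightarrow> reversible mult"
  proof
    assume an: "anisotropic n"
    show "reversible mult" unfolding reversible_def
    proof (intro allI impI)
      fix a b assume "mult a b = 0"
      then have "n a * n b = 0" using n_mult[of a b] n0 by simp
      then have "a = 0 \<or> b = 0" using an by (auto simp: anisotropic_def)
      then show "mult b a = 0" using m0l m0r by auto
    qed
  qed
  have part2: "reversible mult \<longleftrightarrow> finite_dim scale \<and> V.dim (UNIV :: 'a set) \<le> 2"
    if nan: "\<not> anisotropic n"
  proof -
    obtain u where u0: "u \<noteq> 0" and nu: "n u = 0" using nan by (auto simp: anisotropic_def)
    have ne0: "n e \<noteq> 0"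
    proof
      assume "n e = 0"
      then have "n x = 0" for x using n_mult[of e x] el by simp
      then have "polar n u y = 0" for y by (simp add: polar_def)
      then have "u = 0" using nondeg_gen[OF vs qf nd] nu by blast
      then show False using u0 by simp
    qed
    have "n e = n e * n e" using n_mult[of e e] el by simp
    then have ne: "n e = 1" using ne0 by simp
    interpret H: hw scale mult n e
    proof (rule hw.intro[OF vs], rule hw_axioms.intro)
      show "\<And>w. (\<And>y. polar n w y = 0) \<Longrightarrow> n w = 0 \<Longrightarrow> w = 0"
        by (rule nondeg_gen[OF vs qf nd])
    qed (fact ml_add mr_add ml_scale mr_scale el er n_scale p_add p_scale n_mult ne)+
    show ?thesis
    proof
      assume rev: "reversible mult"
      have sp: "V.span {u, H.cj u} = UNIV"
        by (rule H.main[OF nu u0]) (use rev in \<open>auto simp: reversible_def\<close>)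
      have "finite_dim scale" unfolding finite_dim_def by (intro exI[of _ "{u, H.cj u}"]) (simp add: sp)
      moreover have "V.dim (UNIV :: 'a set) \<le> card {u, H.cj u}"
        by (rule V.dim_le_card) (use sp in auto)
      moreover have "card {u, H.cj u} \<le> 2" by (simp add: card_insert_if)
      ultimately show "finite_dim scale \<and> V.dim (UNIV :: 'a set) \<le> 2" by simp
    next
      assume h: "finite_dim scale \<and> V.dim (UNIV :: 'a set) \<le> 2"
      then obtain W where "finite W" "V.span W = UNIV" by (auto simp: finite_dim_def)
      then have "mult x y = mult y x" for x y using H.comm[of W x y] h by simp
      then show "reversible mult" by (simp add: reversible_def)
    qed
  qed
  show ?thesis using part1 part2 by blast
qed

end
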